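(* Let $A=I_0+\dots+I_n$ be a sum of C$^*$-ideals, $p\in\{0,\dots,n\}$ and $J\subseteq\{0,\dots,n\}$ with $|J|=p+1$. Then $$B_J/(B_J\cap Q_{p-1})\cong S^{n-p}\Big(\bigcap_{j\in J}I_j\Big)$$ as C$^*$-algebras.
   Context: $\Delta^n=\{x\in[0,1]^{n+1}:\sum_ix_i=1\}$, $\partial\Delta^n$ = points with a zero coordinate, $\Delta^n_j=\{x\in\Delta^n:x_j\le x_i\ \forall i\}$. $B=\{f:\Delta^n\to A\text{ continuous}: f|_{\partial\Delta^n}=0,\ f(\Delta^n_j)\subseteq I_j\ \forall j\}$; $B_J=\{f\in B:f(\Delta^n_{j'})=0\ \forall j'\notin J\}$; $Q_p=\sum_{|L|\le p+1}B_L$ for $p\in\mathbb Z$ (so $Q_{-1}=0$). $S^k$ denotes the $k$-fold C$^*$-suspension, $SA=\{f:[0,1]\to A\text{ continuous}:f(0)=f(1)=0\}$, with $S^0$ the identity. *)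

theory Defs
  imports "HOL-Analysis.Analysis"
begin

class cstar_algebra = banach + real_normed_algebra +
  fixes scaleC :: "complex \<Rightarrow> 'a \<Rightarrow> 'a"
    and adj :: "'a \<Rightarrow> 'a"
  assumes scaleC_add_right: "scaleC c (x + y) = scaleC c x + scaleC c y"
    and scaleC_add_left: "scaleC (c + d) x = scaleC c x + scaleC d x"
    and scaleC_scaleC: "scaleC c (scaleC d x) = scaleC (c * d) x"
    and scaleC_one: "scaleC 1 x = x"
    and scaleR_scaleC: "scaleR r x = scaleC (complex_of_real r) x"
    and norm_scaleC: "norm (scaleC c x) = cmod c * norm x"
    and mult_scaleC_left: "scaleC c x * y = scaleC c (x * y)"
    and mult_scaleC_right: "x * scaleC c y = scaleC c (x * y)"
    and adj_adj: "adj (adj x) = x"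
    and adj_add: "adj (x + y) = adj x + adj y"
    and adj_scaleC: "adj (scaleC c x) = scaleC (cnj c) (adj x)"
    and adj_mult: "adj (x * y) = adj y * adj x"
    and cstar_identity: "norm (adj x * x) = norm x * norm x"

definition cstar_ideal :: "'a::cstar_algebra set \<Rightarrow> bool" where
  "cstar_ideal I \<longleftrightarrow> closed I \<and> 0 \<in> I \<and>
     (\<forall>x\<in>I. \<forall>y\<in>I. x + y \<in> I) \<and>
     (\<forall>c. \<forall>x\<in>I. scaleC c x \<in> I) \<and>
     (\<forall>x\<in>I. \<forall>a. a * x \<in> I \<and> x * a \<in> I)"

definition stdsimplex :: "nat \<Rightarrow> (nat \<Rightarrow> real) set" where
  "stdsimplex n = {x. (\<forall>i. 0 \<le> x i) \<and> (\<forall>i>n. x i = 0) \<and> (\<Sum>i\<le>n. x i) = 1}"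

definition stdsimplex_bdry :: "nat \<Rightarrow> (nat \<Rightarrow> real) set" where
  "stdsimplex_bdry n = {x \<in> stdsimplex n. \<exists>i\<le>n. x i = 0}"

definition stdsimplex_part :: "nat \<Rightarrow> nat \<Rightarrow> (nat \<Rightarrow> real) set" where
  "stdsimplex_part n j = {x \<in> stdsimplex n. \<forall>i\<le>n. x j \<le> x i}"

text \<open>Functions are made extensional: zero outside their domain.\<close>
definition Balg :: "nat \<Rightarrow> (nat \<Rightarrow> 'a::cstar_algebra set) \<Rightarrow> ((nat \<Rightarrow> real) \<Rightarrow> 'a) set" where
  "Balg n I = {f. continuous_on (stdsimplex n) f \<and> (\<forall>x. x \<notin> stdsimplex n \<longrightarrow> f x = 0) \<and>
      (\<forall>x\<in>stdsimplex_bdry n. f x = 0) \<and> (\<forall>j\<le>n. \<forall>x\<in>stdsimplex_part n j. f x \<in> I j)}"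

definition BalgJ :: "nat \<Rightarrow> (nat \<Rightarrow> 'a::cstar_algebra set) \<Rightarrow> nat set \<Rightarrow> ((nat \<Rightarrow> real) \<Rightarrow> 'a) set" where
  "BalgJ n I J = {f \<in> Balg n I. \<forall>j'\<le>n. j' \<notin> J \<longrightarrow> (\<forall>x\<in>stdsimplex_part n j'. f x = 0)}"

text \<open>Q_p = sum of B_L over L subset of {0..n} with |L| <= p+1 (p an integer; Q_{-1} = 0).\<close>
definition Qalg :: "nat \<Rightarrow> (nat \<Rightarrow> 'a::cstar_algebra set) \<Rightarrow> int \<Rightarrow> ((nat \<Rightarrow> real) \<Rightarrow> 'a) set" where
  "Qalg n I p = {(\<lambda>x. \<Sum>L\<in>{L. L \<subseteq> {..n} \<and> int (card L) \<le> p + 1}. g L x) | g.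
      \<forall>L. L \<subseteq> {..n} \<and> int (card L) \<le> p + 1 \<longrightarrow> g L \<in> BalgJ n I L}"

section \<open>Iterated suspension, modelled on the unitcube [0,1]^k\<close>

definition unitcube :: "nat \<Rightarrow> (nat \<Rightarrow> real) set" where
  "unitcube k = {t. (\<forall>i<k. 0 \<le> t i \<and> t i \<le> 1) \<and> (\<forall>i\<ge>k. t i = 0)}"

definition unitcube_bdry :: "nat \<Rightarrow> (nat \<Rightarrow> real) set" where
  "unitcube_bdry k = {t \<in> unitcube k. \<exists>i<k. t i = 0 \<or> t i = 1}"

text \<open>S^k D = continuous functions [0,1]^k -> D vanishing on the boundary of the unitcube
  (S^0 D = D via evaluation at the single point of unitcube 0).\<close>
definition susp :: "nat \<Rightarrow> 'a::cstar_algebra set \<Rightarrow> ((nat \<Rightarrow> real) \<Rightarrow> 'a) set" where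
  "susp k D = {g. continuous_on (unitcube k) g \<and> (\<forall>t. t \<notin> unitcube k \<longrightarrow> g t = 0) \<and>
      (\<forall>t\<in>unitcube_bdry k. g t = 0) \<and> (\<forall>t. g t \<in> D)}"

definition fadd :: "('b \<Rightarrow> 'a::cstar_algebra) \<Rightarrow> ('b \<Rightarrow> 'a) \<Rightarrow> 'b \<Rightarrow> 'a" where
  "fadd f g = (\<lambda>x. f x + g x)"
definition fmul :: "('b \<Rightarrow> 'a::cstar_algebra) \<Rightarrow> ('b \<Rightarrow> 'a) \<Rightarrow> 'b \<Rightarrow> 'a" where
  "fmul f g = (\<lambda>x. f x * g x)"
definition fscale :: "complex \<Rightarrow> ('b \<Rightarrow> 'a::cstar_algebra) \<Rightarrow> 'b \<Rightarrow> 'a" where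
  "fscale c f = (\<lambda>x. scaleC c (f x))"
definition fadj :: "('b \<Rightarrow> 'a::cstar_algebra) \<Rightarrow> 'b \<Rightarrow> 'a" where
  "fadj f = (\<lambda>x. adj (f x))"
definition supnorm :: "('b \<Rightarrow> 'a::cstar_algebra) \<Rightarrow> real" where
  "supnorm f = (SUP x. norm (f x))"

definition coset :: "('b \<Rightarrow> 'a::cstar_algebra) set \<Rightarrow> ('b \<Rightarrow> 'a) \<Rightarrow> ('b \<Rightarrow> 'a) set" where
  "coset K f = {fadd f k | k. k \<in> K}"

definition quot_norm :: "('b \<Rightarrow> 'a::cstar_algebra) set \<Rightarrow> ('b \<Rightarrow> 'a) \<Rightarrow> real" where
  "quot_norm K f = (INF k\<in>K. supnorm (fadd f k))"

definition quot_cstar_iso ::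
  "('b \<Rightarrow> 'a::cstar_algebra) set \<Rightarrow> ('b \<Rightarrow> 'a) set \<Rightarrow> ('c \<Rightarrow> 'a) set \<Rightarrow> bool" where
  "quot_cstar_iso X K Y \<longleftrightarrow> (\<exists>\<Psi>. bij_betw \<Psi> (coset K ` X) Y \<and>
     (\<forall>f\<in>X. \<forall>g\<in>X. \<Psi> (coset K (fadd f g)) = fadd (\<Psi> (coset K f)) (\<Psi> (coset K g))) \<and>
     (\<forall>f\<in>X. \<forall>g\<in>X. \<Psi> (coset K (fmul f g)) = fmul (\<Psi> (coset K f)) (\<Psi> (coset K g))) \<and>
     (\<forall>c. \<forall>f\<in>X. \<Psi> (coset K (fscale c f)) = fscale c (\<Psi> (coset K f))) \<and>
     (\<forall>f\<in>X. \<Psi> (coset K (fadj f)) = fadj (\<Psi> (coset K f))) \<and>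
     (\<forall>f\<in>X. supnorm (\<Psi> (coset K f)) = quot_norm K f))"

end

theory Submission imports Defs begin

lemma coord_cont [continuous_intros]: "continuous_on S (\<lambda>x::nat\<Rightarrow>real. x i)"
  by (rule continuous_on_subset[OF continuous_on_product_coordinates]) simp

lemma compact_stdsimplex: "compact (stdsimplex n)"
proof -
  have c: "compact (PiE UNIV (\<lambda>_::nat. {0..1::real}))"
    using compactin_PiE[of "\<lambda>_. euclidean" UNIV "\<lambda>_. {0..1::real}"]
    by (simp add: euclidean_product_topology)
  have cl: "closed (stdsimplex n)"
  proof -
    have "stdsimplex n = (\<Inter>i. {x. 0 \<le> x i}) \<inter> (\<Inter>i\<in>{n<..}. {x. x i = 0}) \<inter> {x. (\<Sum>i\<le>n. x i) = 1}"
      unfolding stdsimplex_def by auto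
    moreover have "closed ((\<Inter>i. {x::nat\<Rightarrow>real. 0 \<le> x i}))"
      by (intro closed_INT ballI closed_Collect_le continuous_on_const coord_cont)
    moreover have "closed ((\<Inter>i\<in>{n<..}. {x::nat\<Rightarrow>real. x i = 0}))"
      by (intro closed_INT ballI closed_Collect_eq continuous_on_sum continuous_on_const coord_cont)
    moreover have "closed {x::nat\<Rightarrow>real. (\<Sum>i\<le>n. x i) = 1}"
      by (intro closed_Collect_eq continuous_on_sum continuous_on_const coord_cont)
    ultimately show ?thesis by (metis closed_Int)
  qed
  have sub: "stdsimplex n \<subseteq> PiE UNIV (\<lambda>_::nat. {0..1::real})"
  proof
    fix x assume x: "x \<in> stdsimplex n"
    have "x i \<le> 1" for i
    proof (cases "i \<le> n")
      case True
      have "x i \<le> (\<Sum>i\<le>n. x i)"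
        using x True by (intro member_le_sum) (auto simp: stdsimplex_def)
      then show ?thesis using x by (auto simp: stdsimplex_def)
    next
      case False then show ?thesis using x by (auto simp: stdsimplex_def)
    qed
    then show "x \<in> PiE UNIV (\<lambda>_::nat. {0..1::real})" using x by (auto simp: stdsimplex_def)
  qed
  have "stdsimplex n = stdsimplex n \<inter> PiE UNIV (\<lambda>_::nat. {0..1::real})" using sub by blast
  then show ?thesis using closed_Int_compact[OF cl c] by simp
qed


lemma cont_vanish:
  fixes f :: "'b::metric_space \<Rightarrow> 'c::real_normed_vector" and g :: "'b \<Rightarrow> real"
  assumes f: "continuous_on S f" and g: "continuous_on S g"
    and z: "\<forall>x\<in>S. g x = 0 \<longrightarrow> f x = 0"
    and w: "continuous_on {x\<in>S. g x \<noteq> 0} w" and wb: "\<forall>x\<in>S. \<bar>w x\<bar> \<le> 1"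
  shows "continuous_on S (\<lambda>x. w x *\<^sub>R f x)"
  unfolding continuous_on_def
proof (intro ballI)
  fix x assume x: "x \<in> S"
  show "((\<lambda>x. w x *\<^sub>R f x) \<longlongrightarrow> w x *\<^sub>R f x) (at x within S)"
  proof (cases "g x = 0")
    case True
    then have fx: "f x = 0" using z x by auto
    have "(f \<longlongrightarrow> 0) (at x within S)" using f x fx by (metis continuous_on_def)
    then have l0: "((\<lambda>y. norm (f y)) \<longlongrightarrow> 0) (at x within S)" using tendsto_norm_zero by blast
    have ev: "\<forall>\<^sub>F y in at x within S. norm (w y *\<^sub>R f y) \<le> norm (f y)"
      unfolding eventually_at_filter
    proof (rule always_eventually, intro allI impI)
      fix y assume "y \<in> S"
      then have "\<bar>w y\<bar> \<le> 1" using wb by blast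
      then show "norm (w y *\<^sub>R f y) \<le> norm (f y)"
        by (simp add: mult_left_le_one_le)
    qed
    have "((\<lambda>y. w y *\<^sub>R f y) \<longlongrightarrow> 0) (at x within S)"
      by (rule Lim_null_comparison[OF ev l0])
    then show ?thesis using fx by simp
  next
    case False
    have op0: "openin (top_of_set S) (S \<inter> g -` (-{0}))"
      by (rule continuous_openin_preimage_gen[OF g]) auto
    have "S \<inter> g -` (-{0}) = {x\<in>S. g x \<noteq> 0}" by auto
    then have op: "openin (top_of_set S) {x\<in>S. g x \<noteq> 0}" using op0 by simp
    have "continuous_on {x\<in>S. g x \<noteq> 0} (\<lambda>x. w x *\<^sub>R f x)"
      by (intro continuous_on_scaleR w continuous_on_subset[OF f]) auto
    then have lim: "((\<lambda>x. w x *\<^sub>R f x) \<longlongrightarrow> w x *\<^sub>R f x) (at x within {x\<in>S. g x \<noteq> 0})"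
      using x False by (auto simp: continuous_on_def)
    moreover obtain U where U: "open U" "{x\<in>S. g x \<noteq> 0} = S \<inter> U"
      using op by (auto simp: openin_open)
    moreover have "x \<in> U" using U x False by auto
    ultimately have "at x within S = at x within {x\<in>S. g x \<noteq> 0}"
      by (intro at_within_nhd[where S=U]) auto
    then show ?thesis using lim by simp
  qed
qed


lemma bdd_norm:
  fixes h :: "'b::topological_space \<Rightarrow> 'c::real_normed_vector"
  assumes "compact S" "continuous_on S h" "\<forall>x. x \<notin> S \<longrightarrow> h x = 0"
  shows "bdd_above (range (\<lambda>x. norm (h x)))"
proof -
  have "bounded (h ` S)" using assms compact_continuous_image compact_imp_bounded by blast
  then obtain B where B: "\<forall>y\<in>h ` S. norm y \<le> B" by (auto simp: bounded_iff)
  have "norm (h x) \<le> max B 0" for x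
  proof (cases "x \<in> S")
    case True then have "norm (h x) \<le> B" using B by blast
    then show ?thesis by linarith
  next
    case False then show ?thesis using assms(3) by simp
  qed
  then show ?thesis by (auto intro!: bdd_aboveI)
qed

lemma supnorm_ge: "bdd_above (range (\<lambda>x. norm (h x))) \<Longrightarrow> norm (h x) \<le> supnorm h"
  unfolding supnorm_def by (rule cSUP_upper) auto

lemma supnorm_nonneg: "bdd_above (range (\<lambda>x. norm (h x))) \<Longrightarrow> 0 \<le> supnorm h"
  by (rule order_trans[OF norm_ge_zero supnorm_ge])

lemma supnorm_le: "(\<And>x. norm (h x) \<le> B) \<Longrightarrow> supnorm h \<le> B"
  unfolding supnorm_def by (rule cSUP_least) auto

lemma cont_Min:
  fixes f :: "nat \<Rightarrow> 'b::topological_space \<Rightarrow> real"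
  assumes "finite J" "J \<noteq> {}" "\<And>j. continuous_on S (f j)"
  shows "continuous_on S (\<lambda>x. Min ((\<lambda>j. f j x) ` J))"
  using assms(1,2)
proof (induction J rule: finite_ne_induct)
  case (singleton j) then show ?case using assms(3) by simp
next
  case (insert j F)
  have "(\<lambda>x. Min ((\<lambda>j. f j x) ` insert j F)) = (\<lambda>x. min (f j x) (Min ((\<lambda>j. f j x) ` F)))"
  proof
    fix x
    have "finite ((\<lambda>j. f j x) ` F)" "(\<lambda>j. f j x) ` F \<noteq> {}" using insert by auto
    then show "Min ((\<lambda>j. f j x) ` insert j F) = min (f j x) (Min ((\<lambda>j. f j x) ` F))"
      by (simp add: Min_insert)
  qed
  then show ?case by (simp only:) (rule continuous_on_min[OF assms(3) insert.IH])
qed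

lemma cont_Max:
  fixes f :: "nat \<Rightarrow> 'b::topological_space \<Rightarrow> real"
  assumes "finite J" "J \<noteq> {}" "\<And>j. continuous_on S (f j)"
  shows "continuous_on S (\<lambda>x. Max ((\<lambda>j. f j x) ` J))"
  using assms(1,2)
proof (induction J rule: finite_ne_induct)
  case (singleton j) then show ?case using assms(3) by simp
next
  case (insert j F)
  have "(\<lambda>x. Max ((\<lambda>j. f j x) ` insert j F)) = (\<lambda>x. max (f j x) (Max ((\<lambda>j. f j x) ` F)))"
  proof
    fix x
    have "finite ((\<lambda>j. f j x) ` F)" "(\<lambda>j. f j x) ` F \<noteq> {}" using insert by auto
    then show "Max ((\<lambda>j. f j x) ` insert j F) = max (f j x) (Max ((\<lambda>j. f j x) ` F))"
      by (simp add: Max_insert)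
  qed
  then show ?case by (simp only:) (rule continuous_on_max[OF assms(3) insert.IH])
qed

lemma frac_bound: "0 \<le> (a::real) \<Longrightarrow> a \<le> b \<Longrightarrow> \<bar>a / b\<bar> \<le> 1"
  by (cases "b = 0") (auto simp: divide_le_eq_1)

lemma ideal_zero: "cstar_ideal I \<Longrightarrow> 0 \<in> I"
  by (simp add: cstar_ideal_def)
lemma ideal_add: "cstar_ideal I \<Longrightarrow> x \<in> I \<Longrightarrow> y \<in> I \<Longrightarrow> x + y \<in> I"
  by (simp add: cstar_ideal_def)
lemma ideal_scaleR: "cstar_ideal I \<Longrightarrow> x \<in> I \<Longrightarrow> r *\<^sub>R x \<in> I"
  by (simp add: cstar_ideal_def scaleR_scaleC)
lemma ideal_diff: "cstar_ideal I \<Longrightarrow> x \<in> I \<Longrightarrow> y \<in> I \<Longrightarrow> x - y \<in> I"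
  using ideal_add[of I x "(-1) *\<^sub>R y"] ideal_scaleR[of I y "-1"] by simp
lemma adj_zero: "adj 0 = (0::'a::cstar_algebra)"
  using adj_add[of "0::'a" 0] by simp
lemma scaleC_zero: "scaleC c 0 = (0::'a::cstar_algebra)"
  using scaleC_add_right[of c "0::'a" 0] by simp


locale L4 =
  fixes I :: "nat \<Rightarrow> 'a::cstar_algebra set" and n p :: nat and J :: "nat set" and e :: "nat \<Rightarrow> nat"
  assumes ideals: "\<forall>j\<le>n. cstar_ideal (I j)"
    and p_le: "p \<le> n" and J_sub: "J \<subseteq> {..n}" and J_card: "card J = p + 1"
    and e_bij: "bij_betw e {..<n-p} ({..n} - J)"
begin

abbreviation "k \<equiv> n - p"

definition tJ :: "(nat \<Rightarrow> real) \<Rightarrow> real" where "tJ x = Min ((\<lambda>j. x j) ` J)"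
definition FJ where "FJ = {x \<in> stdsimplex n. \<forall>j\<in>J. x \<in> stdsimplex_part n j}"
definition ie where "ie m = inv_into {..<k} e m"

lemma finJ: "finite J" using J_sub finite_subset by blast
lemma J_ne: "J \<noteq> {}" using J_card by auto
lemma J_le: "j \<in> J \<Longrightarrow> j \<le> n" using J_sub by auto
lemma e_in: "i < k \<Longrightarrow> e i \<le> n \<and> e i \<notin> J"
  using e_bij by (auto simp: bij_betw_def)
lemma ie_in: "m \<le> n \<Longrightarrow> m \<notin> J \<Longrightarrow> ie m < k \<and> e (ie m) = m"
proof -
  assume "m \<le> n" "m \<notin> J"
  then have "m \<in> e ` {..<k}" using e_bij by (auto simp: bij_betw_def)
  then show ?thesis unfolding ie_def using inv_into_into[of m e "{..<k}"] f_inv_into_f[of m e "{..<k}"] by auto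
qed
lemma ie_e: "i < k \<Longrightarrow> ie (e i) = i"
  unfolding ie_def using e_bij by (auto simp: bij_betw_def intro: inv_into_f_f)

lemma sum_split: "(\<Sum>m\<le>n. y m) = (\<Sum>j\<in>J. y j) + (\<Sum>i<k. y (e i))"
proof -
  have "{..n} = J \<union> ({..n} - J)" using J_sub by auto
  then have "(\<Sum>m\<le>n. y m) = (\<Sum>j\<in>J. y j) + (\<Sum>m\<in>{..n} - J. y m)"
    by (metis Diff_disjoint finite_Diff finite_atMost finJ sum.union_disjoint)
  also have "(\<Sum>m\<in>{..n} - J. y m) = (\<Sum>i<k. y (e i))"
    using sum.reindex_bij_betw[OF e_bij, of y] by simp
  finally show ?thesis .
qed

lemma tJ_le: "j \<in> J \<Longrightarrow> tJ x \<le> x j"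
  unfolding tJ_def using finJ by (auto intro: Min_le)
lemma tJ_in: "\<exists>j\<in>J. tJ x = x j"
proof -
  have "tJ x \<in> (\<lambda>j. x j) ` J" unfolding tJ_def using finJ J_ne by (intro Min_in) auto
  then show ?thesis by auto
qed
lemma simplex_nonneg: "x \<in> stdsimplex n \<Longrightarrow> 0 \<le> x i"
  by (simp add: stdsimplex_def)
lemma tJ_nonneg: "x \<in> stdsimplex n \<Longrightarrow> 0 \<le> tJ x"
  using tJ_in simplex_nonneg by metis

lemma FJ_char: "x \<in> FJ \<longleftrightarrow> x \<in> stdsimplex n \<and> (\<forall>j\<in>J. x j = tJ x) \<and> (\<forall>m\<le>n. tJ x \<le> x m)"
proof
  assume x: "x \<in> FJ"
  obtain j0 where j0: "j0 \<in> J" "tJ x = x j0" using tJ_in by blast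
  have a: "x j \<le> x m" if "j \<in> J" "m \<le> n" for j m
    using x that unfolding FJ_def stdsimplex_part_def by auto
  show "x \<in> stdsimplex n \<and> (\<forall>j\<in>J. x j = tJ x) \<and> (\<forall>m\<le>n. tJ x \<le> x m)"
  proof (intro conjI ballI allI impI)
    show "x \<in> stdsimplex n" using x by (simp add: FJ_def)
    fix j assume "j \<in> J"
    then show "x j = tJ x" using a[of j j0] j0 J_le tJ_le[of j x] by force
  next
    fix m assume "m \<le> n" then show "tJ x \<le> x m" using a[of j0 m] j0 by simp
  qed
next
  assume "x \<in> stdsimplex n \<and> (\<forall>j\<in>J. x j = tJ x) \<and> (\<forall>m\<le>n. tJ x \<le> x m)"
  then show "x \<in> FJ" unfolding FJ_def stdsimplex_part_def by auto
qed


lemma tJ_cont: "continuous_on S tJ"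
proof -
  have "continuous_on S (\<lambda>x. Min ((\<lambda>j. (\<lambda>x::nat\<Rightarrow>real. x j) x) ` J))"
    by (rule cont_Min[OF finJ J_ne coord_cont])
  then show ?thesis unfolding tJ_def[abs_def] by simp
qed

lemma Balg_unfold: "f \<in> Balg n I \<longleftrightarrow> continuous_on (stdsimplex n) f \<and> (\<forall>x. x \<notin> stdsimplex n \<longrightarrow> f x = 0) \<and>
      (\<forall>x\<in>stdsimplex_bdry n. f x = 0) \<and> (\<forall>j\<le>n. \<forall>x\<in>stdsimplex_part n j. f x \<in> I j)"
  by (simp add: Balg_def)

lemma BalgJ_scaleI:
  assumes h: "h \<in> Balg n I" and c: "continuous_on (stdsimplex n) (\<lambda>x. c x *\<^sub>R h x)"
    and v: "\<forall>j'\<le>n. j' \<notin> L \<longrightarrow> (\<forall>x\<in>stdsimplex_part n j'. c x *\<^sub>R h x = 0)"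
  shows "(\<lambda>x. c x *\<^sub>R h x) \<in> BalgJ n I L"
  using h c v ideals unfolding BalgJ_def Balg_unfold by (auto intro: ideal_scaleR)

lemma BalgJ_zero: "(\<lambda>x. 0) \<in> BalgJ n I L"
  using ideals unfolding BalgJ_def Balg_unfold by (auto intro: ideal_zero)

lemma BalgJ_add: "f \<in> BalgJ n I L \<Longrightarrow> g \<in> BalgJ n I L \<Longrightarrow> (\<lambda>x. f x + g x) \<in> BalgJ n I L"
  using ideals unfolding BalgJ_def Balg_unfold by (auto intro: ideal_add continuous_on_add)

lemma BalgJ_diff: "f \<in> BalgJ n I L \<Longrightarrow> g \<in> BalgJ n I L \<Longrightarrow> (\<lambda>x. f x - g x) \<in> BalgJ n I L"
  using ideals unfolding BalgJ_def Balg_unfold by (auto intro: ideal_diff continuous_on_diff)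

lemma Qalg_vanish:
  assumes h: "h \<in> Qalg n I (int p - 1)" and x: "x \<in> FJ"
  shows "h x = 0"
proof -
  obtain g where g: "\<forall>L. L \<subseteq> {..n} \<and> int (card L) \<le> int p - 1 + 1 \<longrightarrow> g L \<in> BalgJ n I L"
    and hg: "h = (\<lambda>x. \<Sum>L\<in>{L. L \<subseteq> {..n} \<and> int (card L) \<le> int p - 1 + 1}. g L x)"
    using h unfolding Qalg_def by blast
  have "g L x = 0" if L: "L \<subseteq> {..n}" "int (card L) \<le> int p - 1 + 1" for L
  proof -
    have "\<not> J \<subseteq> L"
    proof
      assume "J \<subseteq> L"
      then have "card J \<le> card L" using L finite_subset by (intro card_mono) auto
      then show False using L J_card by simp
    qed
    then obtain j where j: "j \<in> J" "j \<notin> L" by blast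
    have "x \<in> stdsimplex_part n j" using x j unfolding FJ_def by blast
    then show ?thesis using g L j J_le unfolding BalgJ_def by blast
  qed
  then show ?thesis unfolding hg by simp
qed

definition Dd :: "(nat \<Rightarrow> real) \<Rightarrow> real" where "Dd x = (\<Sum>j\<in>J. x j - tJ x)"
definition ww :: "nat \<Rightarrow> (nat \<Rightarrow> real) \<Rightarrow> real" where "ww j x = (x j - tJ x) / Dd x"

lemma Dd_cont: "continuous_on S Dd"
  unfolding Dd_def[abs_def] by (intro continuous_on_sum continuous_on_diff coord_cont tJ_cont)

lemma ww_cont: "continuous_on {x\<in>S. Dd x \<noteq> 0} (ww j)"
  unfolding ww_def[abs_def] by (intro continuous_on_divide continuous_on_diff coord_cont tJ_cont Dd_cont) auto

lemma Dd_terms: "j \<in> J \<Longrightarrow> 0 \<le> x j - tJ x \<and> x j - tJ x \<le> Dd x"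
proof -
  assume j: "j \<in> J"
  have "x j - tJ x \<le> Dd x" unfolding Dd_def
    using j finJ tJ_le by (intro member_le_sum) auto
  then show ?thesis using tJ_le[OF j] by simp
qed

lemma ww_bound: "j \<in> J \<Longrightarrow> \<bar>ww j x\<bar> \<le> 1"
  using Dd_terms[of j x] unfolding ww_def by (auto simp: divide_le_eq_1)

lemma ww_sum: "Dd x \<noteq> 0 \<Longrightarrow> (\<Sum>j\<in>J. ww j x) = 1"
  unfolding ww_def by (simp add: sum_divide_distrib[symmetric] Dd_def)

lemma Dd_zero_vanish:
  assumes h: "h \<in> BalgJ n I J" and hF: "\<forall>y\<in>FJ. h y = 0" and x: "x \<in> stdsimplex n" and d: "Dd x = 0"
  shows "h x = 0"
proof -
  have eq: "\<forall>j\<in>J. x j = tJ x"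
    using d unfolding Dd_def using sum_nonneg_eq_0_iff[OF finJ, of "\<lambda>j. x j - tJ x"] Dd_terms[of _ x] by auto
  show ?thesis
  proof (cases "\<forall>m\<le>n. tJ x \<le> x m")
    case True then have "x \<in> FJ" using eq x FJ_char by blast
    then show ?thesis using hF by blast
  next
    case False
    then obtain m where m: "m \<le> n" "x m < tJ x" by (auto simp: not_le)
    have "Min ((\<lambda>m. x m) ` {..n}) \<in> (\<lambda>m. x m) ` {..n}" by (intro Min_in) auto
    then obtain m0 where m0: "m0 \<le> n" "x m0 = Min ((\<lambda>m. x m) ` {..n})"
      by (metis (no_types, lifting) atMost_iff imageE)
    have le: "x m0 \<le> x i" if "i \<le> n" for i using m0 that by simp
    then have "x m0 < tJ x" using m by (meson le_less_trans)
    then have "m0 \<notin> J" using eq by auto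
    moreover have "x \<in> stdsimplex_part n m0" using x le unfolding stdsimplex_part_def by auto
    ultimately show ?thesis using h m0 unfolding BalgJ_def by blast
  qed
qed

lemma decomp:
  assumes h: "h \<in> BalgJ n I J" and hF: "\<forall>y\<in>FJ. h y = 0"
  shows "h \<in> Qalg n I (int p - 1)"
proof -
  define LL where "LL = {L. L \<subseteq> {..n} \<and> int (card L) \<le> int p - 1 + 1}"
  define g where "g L = (\<lambda>x. \<Sum>j\<in>{j\<in>J. J - {j} = L}. ww j x *\<^sub>R h x)" for L
  have hB: "h \<in> Balg n I" using h by (simp add: BalgJ_def)
  have hcont: "continuous_on (stdsimplex n) h" using hB by (simp add: Balg_unfold)
  have piece: "(\<lambda>x. ww j x *\<^sub>R h x) \<in> BalgJ n I (J - {j})" if j: "j \<in> J" for j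
  proof (rule BalgJ_scaleI[OF hB])
    show "continuous_on (stdsimplex n) (\<lambda>x. ww j x *\<^sub>R h x)"
      using Dd_zero_vanish[OF h hF] ww_bound[OF j]
      by (intro cont_vanish[OF hcont Dd_cont _ ww_cont]) auto
    show "\<forall>j'\<le>n. j' \<notin> J - {j} \<longrightarrow> (\<forall>x\<in>stdsimplex_part n j'. ww j x *\<^sub>R h x = 0)"
    proof (intro allI impI ballI)
      fix j' x assume j': "j' \<le> n" "j' \<notin> J - {j}" and x: "x \<in> stdsimplex_part n j'"
      show "ww j x *\<^sub>R h x = 0"
      proof (cases "j' = j")
        case True
        obtain j1 where "j1 \<in> J" "tJ x = x j1" using tJ_in by blast
        then have "x j \<le> tJ x" using x True J_le unfolding stdsimplex_part_def by auto
        then show ?thesis using tJ_le[OF j, of x] by (simp add: ww_def)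
      next
        case False then have "j' \<notin> J" using j' by auto
        then show ?thesis using h j' x unfolding BalgJ_def by auto
      qed
    qed
  qed
  have gB: "g L \<in> BalgJ n I L" for L
  proof (cases "\<exists>j\<in>J. L = J - {j}")
    case True
    then obtain j0 where j0: "j0 \<in> J" "L = J - {j0}" by blast
    have "{j\<in>J. J - {j} = L} = {j0}"
    proof
      show "{j\<in>J. J - {j} = L} \<subseteq> {j0}"
      proof
        fix j assume "j \<in> {j\<in>J. J - {j} = L}"
        then have "j \<in> J" "J - {j} = J - {j0}" using j0 by auto
        then show "j \<in> {j0}" using j0 by blast
      qed
    qed (use j0 in auto)
    then have "g L = (\<lambda>x. ww j0 x *\<^sub>R h x)" unfolding g_def by simp
    then show ?thesis using piece[OF j0(1)] j0(2) by simp
  next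
    case False
    then have e0: "{j\<in>J. J - {j} = L} = {}" by blast
    have "g L = (\<lambda>x. 0)" unfolding g_def by (simp only: e0 sum.empty)
    then show ?thesis using BalgJ_zero by simp
  qed
  have finLL: "finite LL" unfolding LL_def
    by (rule finite_subset[of _ "Pow {..n}"]) auto
  have imLL: "(\<lambda>j. J - {j}) ` J \<subseteq> LL" unfolding LL_def using J_sub J_card finJ
    by (auto simp: card_Diff_singleton)
  have "h x = (\<Sum>L\<in>LL. g L x)" for x
  proof -
    have "(\<Sum>L\<in>LL. g L x) = (\<Sum>L\<in>LL. \<Sum>j\<in>{j\<in>J. J - {j} = L}. ww j x *\<^sub>R h x)"
      unfolding g_def by simp
    also have "\<dots> = (\<Sum>j\<in>J. ww j x *\<^sub>R h x)"
      by (rule sum.group[OF finJ finLL imLL])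
    also have "\<dots> = (\<Sum>j\<in>J. ww j x) *\<^sub>R h x" by (simp add: scaleR_sum_left)
    also have "\<dots> = h x"
    proof (cases "x \<in> stdsimplex n \<and> Dd x = 0")
      case True then show ?thesis using Dd_zero_vanish[OF h hF] by simp
    next
      case False
      show ?thesis
      proof (cases "x \<in> stdsimplex n")
        case True then show ?thesis using False ww_sum by simp
      next
        case nx: False then have "h x = 0" using hB by (simp add: Balg_unfold)
        then show ?thesis by simp
      qed
    qed
    finally show ?thesis by simp
  qed
  then have "h = (\<lambda>x. \<Sum>L\<in>LL. g L x)" by (simp add: fun_eq_iff)
  moreover have "\<forall>L. L \<subseteq> {..n} \<and> int (card L) \<le> int p - 1 + 1 \<longrightarrow> g L \<in> BalgJ n I L"
    using gB by blast
  ultimately show ?thesis unfolding Qalg_def LL_def by blast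
qed

definition KK where "KK = BalgJ n I J \<inter> Qalg n I (int p - 1)"

lemma KK_char: "KK = {h \<in> BalgJ n I J. \<forall>x\<in>FJ. h x = 0}"
  unfolding KK_def using Qalg_vanish decomp by blast


definition mx :: "(nat \<Rightarrow> real) \<Rightarrow> real" where "mx u = Max ((\<lambda>i. u i) ` {..k})"
definition su :: "(nat \<Rightarrow> real) \<Rightarrow> real" where "su u = (\<Sum>i<k. u i)"
definition alpha :: "(nat \<Rightarrow> real) \<Rightarrow> nat \<Rightarrow> real" where
  "alpha u = (\<lambda>m. if m \<in> J then (1 - mx u) / real (n+1)
     else if m \<le> n then (1 - mx u) / real (n+1) + (u (ie m) / su u) * mx u else 0)"

lemma cube_0: "u \<in> unitcube k \<Longrightarrow> 0 \<le> u i" by (cases "i < k") (auto simp: unitcube_def)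
lemma cube_1: "u \<in> unitcube k \<Longrightarrow> u i \<le> 1" by (cases "i < k") (auto simp: unitcube_def)
lemma cube_k: "u \<in> unitcube k \<Longrightarrow> k \<le> i \<Longrightarrow> u i = 0" by (auto simp: unitcube_def)

lemma mx_ge: "i \<le> k \<Longrightarrow> u i \<le> mx u" unfolding mx_def by (intro Max_ge) auto
lemma mx_in: "\<exists>i\<le>k. mx u = u i"
proof -
  have "mx u \<in> (\<lambda>i. u i) ` {..k}" unfolding mx_def by (intro Max_in) auto
  then show ?thesis by auto
qed
lemma mx_nonneg: "u \<in> unitcube k \<Longrightarrow> 0 \<le> mx u"
  using mx_ge[of k u] cube_k[of u k] by simp
lemma mx_le1: "u \<in> unitcube k \<Longrightarrow> mx u \<le> 1"
  using mx_in[of u] cube_1 by metis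
lemma su_ge: "u \<in> unitcube k \<Longrightarrow> i < k \<Longrightarrow> u i \<le> su u"
  unfolding su_def by (rule member_le_sum) (auto intro: cube_0)
lemma su_zero: "u \<in> unitcube k \<Longrightarrow> su u = 0 \<Longrightarrow> u i = 0"
  using su_ge[of u i] cube_0[of u i] cube_k[of u i] by (cases "i < k") auto
lemma su_zero_mx: "u \<in> unitcube k \<Longrightarrow> su u = 0 \<Longrightarrow> mx u = 0"
  using mx_in[of u] su_zero by metis
lemma mx_bdry: "u \<in> unitcube k \<Longrightarrow> mx u = 1 \<Longrightarrow> u \<in> unitcube_bdry k"
proof -
  assume u: "u \<in> unitcube k" "mx u = 1"
  obtain i where i: "i \<le> k" "mx u = u i" using mx_in by blast
  have "i < k" using i u cube_k[of u i] by (cases "i = k") auto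
  then show ?thesis using u i unfolding unitcube_bdry_def by auto
qed

lemma mx_scale: "0 \<le> c \<Longrightarrow> mx (\<lambda>i. c * u i) = c * mx u"
proof -
  assume c: "0 \<le> c"
  have "mono ((*) c)" using c by (simp add: mono_def mult_left_mono)
  then have "c * Max ((\<lambda>i. u i) ` {..k}) = Max ((*) c ` ((\<lambda>i. u i) ` {..k}))"
    by (intro mono_Max_commute) auto
  then show ?thesis unfolding mx_def by (simp add: image_image)
qed

lemma k_eq: "k + p + 1 = n + 1" using p_le by simp

lemma alpha_simplex_sum: "u \<in> unitcube k \<Longrightarrow> (\<Sum>m\<le>n. alpha u m) = 1"
proof -
  assume u: "u \<in> unitcube k"
  define \<tau> where "\<tau> = (1 - mx u) / real (n+1)"
  have "(\<Sum>m\<le>n. alpha u m) = (\<Sum>j\<in>J. alpha u j) + (\<Sum>i<k. alpha u (e i))" by (rule sum_split)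
  also have "(\<Sum>j\<in>J. alpha u j) = real (p+1) * \<tau>" using J_card by (simp add: alpha_def \<tau>_def)
  also have "(\<Sum>i<k. alpha u (e i)) = (\<Sum>i<k. \<tau> + (u i / su u) * mx u)"
    by (rule sum.cong) (use e_in ie_e in \<open>auto simp: alpha_def \<tau>_def\<close>)
  also have "\<dots> = real k * \<tau> + (su u / su u) * mx u"
    by (simp add: sum.distrib su_def sum_divide_distrib[symmetric] sum_distrib_right[symmetric])
  also have "(su u / su u) * mx u = mx u" using su_zero_mx[OF u] by (cases "su u = 0") auto
  finally have "(\<Sum>m\<le>n. alpha u m) = real (p+1) * \<tau> + (real k * \<tau> + mx u)" .
  also have "\<dots> = real (n+1) * \<tau> + mx u" using k_eq by (simp add: algebra_simps)
  also have "\<dots> = 1" unfolding \<tau>_def by simp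
  finally show ?thesis .
qed

lemma tJ_const: "(\<forall>j\<in>J. x j = c) \<Longrightarrow> tJ x = c"
proof -
  assume a: "\<forall>j\<in>J. x j = c"
  obtain j where "j \<in> J" "tJ x = x j" using tJ_in by blast
  then show ?thesis using a by simp
qed

lemma alpha_FJ: "u \<in> unitcube k \<Longrightarrow> alpha u \<in> FJ"
proof -
  assume u: "u \<in> unitcube k"
  define \<tau> where "\<tau> = (1 - mx u) / real (n+1)"
  have tau: "0 \<le> \<tau>" using mx_le1[OF u] by (simp add: \<tau>_def)
  have ge: "\<tau> \<le> alpha u m" if "m \<le> n" for m
  proof -
    have "0 \<le> su u" unfolding su_def by (intro sum_nonneg cube_0[OF u])
    then have "0 \<le> u (ie m) / su u * mx u"
      by (intro mult_nonneg_nonneg divide_nonneg_nonneg cube_0[OF u] mx_nonneg[OF u])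
    then show ?thesis using that by (simp add: alpha_def \<tau>_def)
  qed
  have tJa: "tJ (alpha u) = \<tau>" by (rule tJ_const) (simp add: alpha_def \<tau>_def)
  have simp: "alpha u \<in> stdsimplex n"
    unfolding stdsimplex_def
  proof (intro CollectI conjI allI impI)
    fix i show "0 \<le> alpha u i"
      using ge[of i] tau by (cases "i \<le> n") (auto simp: alpha_def J_le)
  next
    fix i assume i: "n < i"
    then have "i \<notin> J" using J_le by fastforce
    then show "alpha u i = 0" using i by (simp add: alpha_def)
  qed (rule alpha_simplex_sum[OF u])
  show ?thesis unfolding FJ_char using simp tJa ge by (auto simp: alpha_def \<tau>_def)
qed

definition sig :: "(nat \<Rightarrow> real) \<Rightarrow> nat \<Rightarrow> real" where
  "sig x i = (if i < k then max 0 (x (e i) - tJ x) else 0)"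
definition ssum where "ssum x = (\<Sum>i<k. sig x i)"
definition smax where "smax x = Max ((\<lambda>i. sig x i) ` {..k})"
definition beta :: "(nat \<Rightarrow> real) \<Rightarrow> nat \<Rightarrow> real" where
  "beta x = (\<lambda>i. (sig x i / smax x) * ssum x)"

lemma sig_nonneg: "0 \<le> sig x i" by (simp add: sig_def)
lemma smax_ge: "i \<le> k \<Longrightarrow> sig x i \<le> smax x" unfolding smax_def by (intro Max_ge) auto
lemma smax_nonneg: "0 \<le> smax x" using smax_ge[of k x] by (simp add: sig_def)
lemma sig_le_smax: "sig x i \<le> smax x"
  using smax_ge[of i x] smax_nonneg[of x] by (cases "i \<le> k") (auto simp: sig_def)
lemma smax_in: "\<exists>i\<le>k. smax x = sig x i"
proof -
  have "smax x \<in> (\<lambda>i. sig x i) ` {..k}" unfolding smax_def by (intro Max_in) auto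
  then show ?thesis by auto
qed
lemma ssum_ge: "sig x i \<le> ssum x"
proof (cases "i < k")
  case True then show ?thesis unfolding ssum_def by (intro member_le_sum) (auto intro: sig_nonneg)
next
  case False then show ?thesis by (simp add: sig_def ssum_def sum_nonneg)
qed
lemma smax_zero: "smax x = 0 \<Longrightarrow> sig x i = 0"
  using sig_le_smax[of x i] sig_nonneg[of x i] by simp
lemma smax_zero_ssum: "smax x = 0 \<Longrightarrow> ssum x = 0"
  unfolding ssum_def using smax_zero by simp

lemma mx_beta: "mx (beta x) = ssum x"
proof (cases "smax x = 0")
  case True
  then have "beta x = (\<lambda>i. 0 * sig x i)" by (simp add: beta_def fun_eq_iff)
  then show ?thesis using mx_scale[of 0 "sig x"] True smax_zero_ssum by simp
next
  case False
  then have pos: "0 < smax x" using smax_nonneg[of x] by simp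
  have "beta x = (\<lambda>i. (ssum x / smax x) * sig x i)" by (simp add: beta_def fun_eq_iff)
  moreover have "mx (sig x) = smax x" by (simp add: mx_def smax_def)
  moreover have "0 \<le> ssum x / smax x" using ssum_ge[of x 0] sig_nonneg[of x 0] pos by simp
  ultimately show ?thesis using mx_scale[of "ssum x / smax x" "sig x"] pos by simp
qed

lemma ssum_le1: "x \<in> stdsimplex n \<Longrightarrow> ssum x \<le> 1"
proof -
  assume x: "x \<in> stdsimplex n"
  have "ssum x \<le> (\<Sum>i<k. x (e i))"
    unfolding ssum_def using tJ_nonneg[OF x] simplex_nonneg[OF x]
    by (intro sum_mono) (auto simp: sig_def)
  also have "\<dots> \<le> (\<Sum>j\<in>J. x j) + (\<Sum>i<k. x (e i))"
    using simplex_nonneg[OF x] by (simp add: sum_nonneg)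
  also have "\<dots> = 1" using sum_split[of x] x by (simp add: stdsimplex_def)
  finally show ?thesis .
qed

lemma beta_cube: "x \<in> stdsimplex n \<Longrightarrow> beta x \<in> unitcube k"
proof -
  assume x: "x \<in> stdsimplex n"
  have s0: "0 \<le> ssum x" unfolding ssum_def by (intro sum_nonneg sig_nonneg)
  have b0: "0 \<le> beta x i" for i
    unfolding beta_def by (intro mult_nonneg_nonneg divide_nonneg_nonneg sig_nonneg smax_nonneg s0)
  have b1: "beta x i \<le> 1" for i
  proof -
    have "sig x i / smax x \<le> 1" using sig_le_smax[of x i] sig_nonneg[of x i] smax_nonneg[of x]
      by (cases "smax x = 0") (auto simp: divide_le_eq_1)
    moreover have "0 \<le> ssum x" "ssum x \<le> 1" using ssum_ge[of x 0] sig_nonneg[of x 0] ssum_le1[OF x] by auto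
    moreover have "0 \<le> sig x i / smax x" using sig_nonneg smax_nonneg by simp
    ultimately show ?thesis unfolding beta_def using mult_le_one by blast
  qed
  have "\<forall>i\<ge>k. beta x i = 0" by (simp add: beta_def sig_def)
  then show ?thesis unfolding unitcube_def using b0 b1 by blast
qed


lemma smax_mx: "smax x = mx (sig x)" by (simp add: smax_def mx_def)

lemma su_nonneg: "u \<in> unitcube k \<Longrightarrow> 0 \<le> su u"
  unfolding su_def by (intro sum_nonneg cube_0)

lemma beta_alpha: "u \<in> unitcube k \<Longrightarrow> beta (alpha u) = u"
proof -
  assume u: "u \<in> unitcube k"
  define \<tau> where "\<tau> = (1 - mx u) / real (n+1)"
  define c where "c = mx u / su u"
  have c0: "0 \<le> c" unfolding c_def using mx_nonneg[OF u] su_nonneg[OF u] by simp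
  have tJa: "tJ (alpha u) = \<tau>" by (rule tJ_const) (simp add: alpha_def \<tau>_def)
  have sg: "sig (alpha u) = (\<lambda>i. c * u i)"
  proof
    fix i show "sig (alpha u) i = c * u i"
    proof (cases "i < k")
      case True
      have "alpha u (e i) = \<tau> + c * u i" using e_in[OF True] ie_e[OF True]
        by (simp add: alpha_def \<tau>_def c_def)
      then show ?thesis using True tJa c0 cube_0[OF u, of i] by (simp add: sig_def)
    next
      case False then show ?thesis using cube_k[OF u, of i] by (simp add: sig_def)
    qed
  qed
  show ?thesis
  proof (cases "su u = 0")
    case True
    then have u0: "\<And>i. u i = 0" using su_zero[OF u] by auto
    show ?thesis unfolding beta_def sg by (simp add: u0 fun_eq_iff)
  next
    case False
    then have spos: "0 < su u" using su_nonneg[OF u] by simp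
    have "\<exists>i<k. 0 < u i"
    proof (rule ccontr)
      assume "\<not> (\<exists>i<k. 0 < u i)"
      then have "su u \<le> 0" unfolding su_def by (intro sum_nonpos) (meson lessThan_iff not_less)
      then show False using spos by simp
    qed
    then obtain i where i: "i < k" "0 < u i" by blast
    have mpos: "0 < mx u" using mx_ge[of i u] i by simp
    have cpos: "0 < c" unfolding c_def using mpos spos by simp
    have ss: "ssum (alpha u) = c * su u" by (simp add: ssum_def sg su_def sum_distrib_left)
    have sm: "smax (alpha u) = c * mx u" using mx_scale[OF c0, of u] by (simp add: smax_mx sg)
    have csu: "c * su u = mx u" unfolding c_def using spos by simp
    show ?thesis
    proof
      fix j
      show "beta (alpha u) j = u j"
        unfolding beta_def ss sm csu sg using cpos mpos by simp
    qed
  qed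
qed

lemma alpha_beta: "x \<in> FJ \<Longrightarrow> alpha (beta x) = x"
proof -
  assume x: "x \<in> FJ"
  define t where "t = tJ x"
  have xs: "x \<in> stdsimplex n" and xJ: "\<forall>j\<in>J. x j = t" and xge: "\<forall>m\<le>n. t \<le> x m"
    using x unfolding FJ_char t_def by auto
  have sg: "i < k \<Longrightarrow> sig x i = x (e i) - t" for i
    using xge e_in[of i] by (simp add: sig_def t_def)
  have "1 = (\<Sum>j\<in>J. x j) + (\<Sum>i<k. x (e i))" using sum_split[of x] xs by (simp add: stdsimplex_def)
  also have "(\<Sum>j\<in>J. x j) = real (p+1) * t" using xJ J_card by simp
  also have "(\<Sum>i<k. x (e i)) = (\<Sum>i<k. t + sig x i)" by (rule sum.cong) (auto simp: sg)
  also have "\<dots> = real k * t + ssum x" by (simp add: sum.distrib ssum_def)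
  finally have "1 = real (p+1) * t + (real k * t + ssum x)" .
  moreover have "real (n+1) * t = real (p+1) * t + real k * t"
    using k_eq by (metis distrib_right of_nat_add add.commute add.left_commute)
  ultimately have ssum_eq: "ssum x = 1 - real (n+1) * t" by linarith
  have mb: "mx (beta x) = ssum x" by (rule mx_beta)
  show ?thesis
  proof
    fix m
    show "alpha (beta x) m = x m"
    proof (cases "m \<in> J")
      case True then show ?thesis using xJ mb ssum_eq by (simp add: alpha_def)
    next
      case nJ: False
      show ?thesis
      proof (cases "m \<le> n")
        case False then show ?thesis using nJ xs by (simp add: alpha_def stdsimplex_def)
      next
        case True
        obtain i where i: "i < k" "e i = m" "ie m = i" using ie_in[OF True nJ] by blast
        have base: "(1 - mx (beta x)) / real (n+1) = t" using mb ssum_eq by simp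
        show ?thesis
        proof (cases "smax x = 0")
          case True
          then have "sig x i = 0" by (rule smax_zero)
          then show ?thesis using nJ \<open>m \<le> n\<close> base i sg[OF i(1)]
            by (simp add: alpha_def beta_def)
        next
          case False
          then have smpos: "0 < smax x" using smax_nonneg[of x] by simp
          obtain i0 where "smax x = sig x i0" using smax_in by blast
          then have sspos: "0 < ssum x" using smpos ssum_ge[of x i0] by linarith
          have "su (beta x) = ssum x / smax x * ssum x"
            unfolding su_def beta_def ssum_def by (simp add: sum_distrib_right sum_divide_distrib)
          then have "beta x i / su (beta x) * mx (beta x) = sig x i"
            using smpos sspos mb unfolding beta_def by (simp add: field_simps)
          then show ?thesis using nJ \<open>m \<le> n\<close> base i sg[OF i(1)] by (simp add: alpha_def)
        qed
      qed
    qed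
  qed
qed

lemma mx_cont: "continuous_on S mx"
proof -
  have "continuous_on S (\<lambda>u. Max ((\<lambda>i. (\<lambda>u::nat\<Rightarrow>real. u i) u) ` {..k}))"
    by (rule cont_Max) (auto intro: coord_cont)
  then show ?thesis unfolding mx_def[abs_def] by simp
qed

lemma su_cont: "continuous_on S su"
  unfolding su_def[abs_def] by (intro continuous_on_sum coord_cont)

lemma alpha_cont: "continuous_on (unitcube k) alpha"
proof (rule continuous_on_coordinatewise_then_product)
  fix m
  have c1: "continuous_on (unitcube k) (\<lambda>u. (1 - mx u) / real (n+1))"
    by (intro continuous_on_divide continuous_on_diff continuous_on_const mx_cont) auto
  show "continuous_on (unitcube k) (\<lambda>u. alpha u m)"
  proof (cases "m \<in> J")
    case True then show ?thesis using c1 by (simp add: alpha_def)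
  next
    case nJ: False
    show ?thesis
    proof (cases "m \<le> n")
      case True
      obtain i where i: "i < k" "ie m = i" using ie_in[OF True nJ] by blast
      have "continuous_on (unitcube k) (\<lambda>u. (u i / su u) *\<^sub>R mx u)"
      proof (rule cont_vanish[OF mx_cont su_cont])
        show "\<forall>x\<in>unitcube k. su x = 0 \<longrightarrow> mx x = 0" using su_zero_mx by blast
        show "continuous_on {x \<in> unitcube k. su x \<noteq> 0} (\<lambda>u. u i / su u)"
          by (intro continuous_on_divide coord_cont su_cont) auto
        show "\<forall>x\<in>unitcube k. \<bar>x i / su x\<bar> \<le> 1"
        proof
          fix x assume "x \<in> unitcube k"
          then show "\<bar>x i / su x\<bar> \<le> 1" using su_ge[of x i] i(1) cube_0[of x i] frac_bound by simp
        qed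
      qed
      then have "continuous_on (unitcube k) (\<lambda>u. (1 - mx u) / real (n+1) + (u i / su u) * mx u)"
        using c1 by (intro continuous_on_add) auto
      then show ?thesis using nJ True i by (simp add: alpha_def)
    next
      case False then show ?thesis using nJ by (simp add: alpha_def)
    qed
  qed
qed

lemma sig_cont: "continuous_on S (\<lambda>x. sig x i)"
proof (cases "i < k")
  case True
  have "continuous_on S (\<lambda>x. max 0 (x (e i) - tJ x))"
    by (intro continuous_on_max continuous_on_const continuous_on_diff coord_cont tJ_cont)
  then show ?thesis using True by (simp add: sig_def)
qed (simp add: sig_def)

lemma ssum_cont: "continuous_on S ssum"
  unfolding ssum_def[abs_def] by (intro continuous_on_sum sig_cont)

lemma smax_cont: "continuous_on S smax"
proof -
  have "continuous_on S (\<lambda>x. Max ((\<lambda>i. (\<lambda>x. sig x i) x) ` {..k}))"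
    by (rule cont_Max) (auto intro: sig_cont)
  then show ?thesis unfolding smax_def[abs_def] by simp
qed

lemma beta_cont: "continuous_on S beta"
proof (rule continuous_on_coordinatewise_then_product)
  fix i
  have "continuous_on S (\<lambda>x. (sig x i / smax x) *\<^sub>R ssum x)"
  proof (rule cont_vanish[OF ssum_cont smax_cont])
    show "\<forall>x\<in>S. smax x = 0 \<longrightarrow> ssum x = 0" using smax_zero_ssum by blast
    show "continuous_on {x \<in> S. smax x \<noteq> 0} (\<lambda>x. sig x i / smax x)"
      by (intro continuous_on_divide sig_cont smax_cont) auto
    show "\<forall>x\<in>S. \<bar>sig x i / smax x\<bar> \<le> 1"
      using sig_le_smax sig_nonneg frac_bound by blast
  qed
  then show "continuous_on S (\<lambda>x. beta x i)" by (simp add: beta_def)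
qed


definition R :: "((nat \<Rightarrow> real) \<Rightarrow> 'a) \<Rightarrow> (nat \<Rightarrow> real) \<Rightarrow> 'a" where
  "R f = (\<lambda>u. if u \<in> unitcube k then f (alpha u) else 0)"

lemma tJ_alpha: "tJ (alpha u) = (1 - mx u) / real (n+1)"
  by (rule tJ_const) (simp add: alpha_def)

lemma FJ_simplex: "x \<in> FJ \<Longrightarrow> x \<in> stdsimplex n" by (simp add: FJ_def)

lemma R_susp:
  assumes f: "f \<in> BalgJ n I J"
  shows "R f \<in> susp k (\<Inter>j\<in>J. I j)"
proof -
  have fB: "f \<in> Balg n I" using f by (simp add: BalgJ_def)
  have fc: "continuous_on (stdsimplex n) f" using fB by (simp add: Balg_unfold)
  have sub: "alpha ` unitcube k \<subseteq> stdsimplex n" using alpha_FJ FJ_simplex by blast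
  have c1: "continuous_on (unitcube k) (\<lambda>u. f (alpha u))"
    by (rule continuous_on_compose2[OF fc alpha_cont sub])
  have c: "continuous_on (unitcube k) (R f)"
    by (rule continuous_on_eq[OF c1]) (simp add: R_def)
  have bd: "R f u = 0" if u: "u \<in> unitcube_bdry k" for u
  proof -
    have uc: "u \<in> unitcube k" using u by (simp add: unitcube_bdry_def)
    obtain i where i: "i < k" "u i = 0 \<or> u i = 1" using u by (auto simp: unitcube_bdry_def)
    have aF: "alpha u \<in> FJ" by (rule alpha_FJ[OF uc])
    show ?thesis
    proof (cases "u i = 0")
      case True
      have "alpha u (e i) = (1 - mx u) / real (n+1)" using e_in[OF i(1)] ie_e[OF i(1)] True
        by (simp add: alpha_def)
      then have "alpha u (e i) = tJ (alpha u)" by (simp only: tJ_alpha)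
      then have "alpha u \<in> stdsimplex_part n (e i)"
        using aF unfolding FJ_char stdsimplex_part_def by auto
      then have "f (alpha u) = 0" using f e_in[OF i(1)] unfolding BalgJ_def by blast
      then show ?thesis using uc by (simp add: R_def)
    next
      case False
      then have "u i = 1" using i by simp
      then have "mx u = 1" using mx_ge[of i u] i mx_le1[OF uc] by simp
      moreover obtain j where j: "j \<in> J" using J_ne by blast
      ultimately have "alpha u j = 0" by (simp add: alpha_def)
      then have "alpha u \<in> stdsimplex_bdry n"
        using aF j J_le unfolding stdsimplex_bdry_def FJ_def by blast
      then have "f (alpha u) = 0" using fB by (simp add: Balg_unfold)
      then show ?thesis using uc by (simp add: R_def)
    qed
  qed
  have v: "R f u \<in> (\<Inter>j\<in>J. I j)" for u
  proof (cases "u \<in> unitcube k")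
    case True
    have "alpha u \<in> FJ" by (rule alpha_FJ[OF True])
    then have "f (alpha u) \<in> I j" if "j \<in> J" for j
      using fB that J_le unfolding FJ_def Balg_unfold by blast
    then show ?thesis using True by (simp add: R_def)
  next
    case False
    have "0 \<in> I j" if "j \<in> J" for j using ideals J_le[OF that] ideal_zero by blast
    then show ?thesis using False by (simp add: R_def)
  qed
  show ?thesis unfolding susp_def using c bd v by (auto simp: R_def)
qed

definition chi :: "(nat \<Rightarrow> real) \<Rightarrow> real" where
  "chi x = (if ssum x < 1 then min 1 (real (n+1) * tJ x / (1 - ssum x)) else 0)"

lemma beta_bdry_sig: "x \<in> stdsimplex n \<Longrightarrow> i < k \<Longrightarrow> sig x i = 0 \<Longrightarrow> beta x \<in> unitcube_bdry k"
  using beta_cube[of x] unfolding unitcube_bdry_def by (auto simp: beta_def)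

lemma beta_bdry_one: "x \<in> stdsimplex n \<Longrightarrow> ssum x = 1 \<Longrightarrow> beta x \<in> unitcube_bdry k"
  using mx_bdry[OF beta_cube] mx_beta by metis

lemma sig_zero_part: "x \<in> stdsimplex_part n m \<Longrightarrow> m \<le> n \<Longrightarrow> m \<notin> J \<Longrightarrow> sig x (ie m) = 0"
proof -
  assume x: "x \<in> stdsimplex_part n m" and m: "m \<le> n" "m \<notin> J"
  obtain j where j: "j \<in> J" "tJ x = x j" using tJ_in by blast
  have "x m \<le> tJ x" using x j J_le unfolding stdsimplex_part_def by auto
  then show ?thesis using ie_in[OF m] by (simp add: sig_def)
qed

lemma surj_R:
  assumes g: "g \<in> susp k (\<Inter>j\<in>J. I j)"
  shows "\<exists>f\<in>BalgJ n I J. R f = g"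
proof -
  have gc: "continuous_on (unitcube k) g" and g0: "\<forall>t. t \<notin> unitcube k \<longrightarrow> g t = 0"
    and gb: "\<forall>t\<in>unitcube_bdry k. g t = 0" and gv: "\<forall>t. g t \<in> (\<Inter>j\<in>J. I j)"
    using g unfolding susp_def by auto
  define f where "f x = (if x \<in> stdsimplex n then chi x *\<^sub>R g (beta x) else 0)" for x
  have gbz: "g (beta x) = 0" if "x \<in> stdsimplex n" "i < k" "sig x i = 0" for x i
    using gb beta_bdry_sig[OF that] by blast
  have cgb: "continuous_on (stdsimplex n) (\<lambda>x. g (beta x))"
    by (rule continuous_on_compose2[OF gc beta_cont]) (use beta_cube in blast)
  have chi_b: "0 \<le> chi x \<and> chi x \<le> 1" if "x \<in> stdsimplex n" for x
    using tJ_nonneg[OF that] by (auto simp: chi_def)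
  have cont: "continuous_on (stdsimplex n) (\<lambda>x. chi x *\<^sub>R g (beta x))"
  proof (rule cont_vanish[OF cgb, of "\<lambda>x. 1 - ssum x"])
    show "continuous_on (stdsimplex n) (\<lambda>x. 1 - ssum x)"
      by (intro continuous_on_diff continuous_on_const ssum_cont)
    show "\<forall>x\<in>stdsimplex n. 1 - ssum x = 0 \<longrightarrow> g (beta x) = 0"
      using gb beta_bdry_one by auto
    have "continuous_on {x \<in> stdsimplex n. 1 - ssum x \<noteq> 0} (\<lambda>x. min 1 (real (n+1) * tJ x / (1 - ssum x)))"
      by (intro continuous_on_min continuous_on_const continuous_on_divide continuous_on_mult
          continuous_on_diff ssum_cont tJ_cont) auto
    then show "continuous_on {x \<in> stdsimplex n. 1 - ssum x \<noteq> 0} chi"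
    proof (rule continuous_on_eq)
      fix x assume "x \<in> {x \<in> stdsimplex n. 1 - ssum x \<noteq> 0}"
      then have "ssum x < 1" using ssum_le1 by force
      then show "min 1 (real (n+1) * tJ x / (1 - ssum x)) = chi x" by (simp add: chi_def)
    qed
    show "\<forall>x\<in>stdsimplex n. \<bar>chi x\<bar> \<le> 1" using chi_b by auto
  qed
  have fc: "continuous_on (stdsimplex n) f"
    by (rule continuous_on_eq[OF cont]) (simp add: f_def)
  have vanishC: "f x = 0" if "x \<in> stdsimplex_part n m" "m \<le> n" "m \<notin> J" for x m
  proof (cases "x \<in> stdsimplex n")
    case True
    have "g (beta x) = 0" using gbz[OF True, of "ie m"] ie_in[OF that(2,3)] sig_zero_part[OF that] by blast
    then show ?thesis by (simp add: f_def)
  qed (simp add: f_def)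
  have fB: "f \<in> BalgJ n I J"
    unfolding BalgJ_def Balg_unfold
  proof (intro CollectI conjI allI impI ballI fc)
    fix x assume "x \<notin> stdsimplex n" then show "f x = 0" by (simp add: f_def)
  next
    fix x assume x: "x \<in> stdsimplex_bdry n"
    then have xs: "x \<in> stdsimplex n" by (simp add: stdsimplex_bdry_def)
    obtain i where i: "i \<le> n" "x i = 0" using x by (auto simp: stdsimplex_bdry_def)
    show "f x = 0"
    proof (cases "i \<in> J")
      case True
      then have "tJ x = 0" using tJ_le[OF True, of x] i tJ_nonneg[OF xs] by simp
      then have "chi x = 0" by (simp add: chi_def)
      then show ?thesis by (simp add: f_def)
    next
      case False
      obtain i' where i': "i' < k" "e i' = i" "ie i = i'" using ie_in[OF i(1) False] by blast
      have "sig x i' = 0" using i i' tJ_nonneg[OF xs] by (simp add: sig_def)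
      then show ?thesis using gbz[OF xs i'(1)] by (simp add: f_def)
    qed
  next
    fix j x assume j: "j \<le> n" and x: "x \<in> stdsimplex_part n j"
    show "f x \<in> I j"
    proof (cases "j \<in> J")
      case True
      have "g (beta x) \<in> I j" using gv True by blast
      then show ?thesis using ideals j by (auto simp: f_def intro: ideal_scaleR ideal_zero)
    next
      case False
      have "cstar_ideal (I j)" using ideals j by simp
      then show ?thesis using vanishC[OF x j False] ideal_zero by simp
    qed
  next
    fix j' x assume "j' \<le> n" "j' \<notin> J" "x \<in> stdsimplex_part n j'"
    then show "f x = 0" using vanishC by blast
  qed
  have "R f = g"
  proof
    fix u
    show "R f u = g u"
    proof (cases "u \<in> unitcube k")
      case False then show ?thesis using g0 by (simp add: R_def)
    next
      case True
      have aF: "alpha u \<in> stdsimplex n" using alpha_FJ[OF True] FJ_simplex by blast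
      have ba: "beta (alpha u) = u" by (rule beta_alpha[OF True])
      have ss: "ssum (alpha u) = mx u" using mx_beta[of "alpha u"] ba by simp
      show ?thesis
      proof (cases "mx u = 1")
        case True
        have "g u = 0" using gb mx_bdry[OF \<open>u \<in> unitcube k\<close> True] by blast
        then show ?thesis using \<open>u \<in> unitcube k\<close> aF ba by (simp add: R_def f_def)
      next
        case False
        then have lt: "mx u < 1" using mx_le1[OF True] by simp
        have "chi (alpha u) = 1" using lt unfolding chi_def ss tJ_alpha by simp
        then show ?thesis using True aF ba by (simp add: R_def f_def)
      qed
    qed
  qed
  then show ?thesis using fB by blast
qed


lemma Balg_bdd: "f \<in> Balg n I \<Longrightarrow> bdd_above (range (\<lambda>x. norm (f x)))"
  by (rule bdd_norm[OF compact_stdsimplex]) (auto simp: Balg_unfold)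

lemma BalgJ_bdd: "f \<in> BalgJ n I L \<Longrightarrow> bdd_above (range (\<lambda>x. norm (f x)))"
  using Balg_bdd by (simp add: BalgJ_def)

lemma R_bdd: assumes f: "f \<in> BalgJ n I J" shows "bdd_above (range (\<lambda>u. norm (R f u)))"
proof -
  obtain B where B: "\<forall>y\<in>range (\<lambda>x. norm (f x)). y \<le> B" using BalgJ_bdd[OF f] by (auto simp: bdd_above_def)
  have B0: "0 \<le> B" using B norm_ge_zero[of "f undefined"] by (meson order_trans rangeI)
  have "norm (R f u) \<le> B" for u
    using B B0 by (cases "u \<in> unitcube k") (auto simp: R_def)
  then show ?thesis by (intro bdd_aboveI[where M=B]) auto
qed

definition DD :: "(nat \<Rightarrow> real) \<Rightarrow> real" where
  "DD x = Dd x + (\<Sum>m\<in>{..n} - J. max 0 (tJ x - x m))"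

lemma DD_cont: "continuous_on S DD"
  unfolding DD_def[abs_def]
  by (intro continuous_on_add Dd_cont continuous_on_sum continuous_on_max continuous_on_const
      continuous_on_diff tJ_cont coord_cont)

lemma Dd_nonneg: "0 \<le> Dd x"
  unfolding Dd_def using Dd_terms by (intro sum_nonneg) auto

lemma DD_nonneg: "0 \<le> DD x"
  unfolding DD_def using Dd_nonneg by (intro add_nonneg_nonneg sum_nonneg) auto

lemma Dd_zero_eq: "Dd x = 0 \<Longrightarrow> \<forall>j\<in>J. x j = tJ x"
  unfolding Dd_def using sum_nonneg_eq_0_iff[OF finJ, of "\<lambda>j. x j - tJ x"] Dd_terms[of _ x] by auto

lemma DD_zero: "x \<in> stdsimplex n \<Longrightarrow> DD x = 0 \<Longrightarrow> x \<in> FJ"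
proof -
  assume x: "x \<in> stdsimplex n" and d: "DD x = 0"
  have s2: "0 \<le> (\<Sum>m\<in>{..n} - J. max 0 (tJ x - x m))" by (intro sum_nonneg) auto
  have "Dd x = 0" using d Dd_nonneg[of x] s2 unfolding DD_def by linarith
  then have a: "\<forall>j\<in>J. x j = tJ x" by (rule Dd_zero_eq)
  have "(\<Sum>m\<in>{..n} - J. max 0 (tJ x - x m)) = 0" using d Dd_nonneg[of x] s2 unfolding DD_def by linarith
  then have "\<forall>m\<in>{..n} - J. max 0 (tJ x - x m) = 0"
    using sum_nonneg_eq_0_iff[of "{..n} - J" "\<lambda>m. max 0 (tJ x - x m)"] by auto
  then have "\<forall>m\<le>n. tJ x \<le> x m" using a by (metis Diff_iff atMost_iff max.cobounded2 order_refl diff_le_0_iff_le max_def)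
  then show ?thesis using x a FJ_char by blast
qed

lemma FJ_DD: "x \<in> FJ \<Longrightarrow> DD x = 0"
proof -
  assume x: "x \<in> FJ"
  then have a: "\<forall>j\<in>J. x j = tJ x" and b: "\<forall>m\<le>n. tJ x \<le> x m" using FJ_char by auto
  have "Dd x = 0" unfolding Dd_def using a by simp
  moreover have "(\<Sum>m\<in>{..n} - J. max 0 (tJ x - x m)) = 0" using b by (intro sum.neutral) auto
  ultimately show ?thesis by (simp add: DD_def)
qed

lemma zero_KK: "(\<lambda>x. 0) \<in> KK"
  using BalgJ_zero KK_char by auto

lemma norm_eq:
  assumes f: "f \<in> BalgJ n I J"
  shows "supnorm (R f) = quot_norm KK f"
proof -
  define M where "M = supnorm (R f)"
  have fB: "f \<in> Balg n I" using f by (simp add: BalgJ_def)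
  have fc: "continuous_on (stdsimplex n) f" using fB by (simp add: Balg_unfold)
  have f0: "\<forall>x. x \<notin> stdsimplex n \<longrightarrow> f x = 0" using fB by (simp add: Balg_unfold)
  have M0: "0 \<le> M" unfolding M_def by (rule supnorm_nonneg[OF R_bdd[OF f]])
  have fFJ: "norm (f x) \<le> M" if x: "x \<in> FJ" for x
  proof -
    have xs: "x \<in> stdsimplex n" using x by (rule FJ_simplex)
    have "R f (beta x) = f x" using beta_cube[OF xs] alpha_beta[OF x] by (simp add: R_def)
    then show ?thesis unfolding M_def using supnorm_ge[OF R_bdd[OF f], of "beta x"] by simp
  qed
  have addB: "(\<lambda>x. f x + h x) \<in> BalgJ n I J" if "h \<in> KK" for h
    using BalgJ_add[OF f] that KK_char by blast
  have fadd_eq: "fadd f h = (\<lambda>x. f x + h x)" for h by (simp add: fadd_def fun_eq_iff)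
  have lower: "M \<le> supnorm (fadd f h)" if h: "h \<in> KK" for h
  proof -
    have hv: "\<forall>x\<in>FJ. h x = 0" using h KK_char by blast
    have bd: "bdd_above (range (\<lambda>x. norm (fadd f h x)))" using BalgJ_bdd[OF addB[OF h]] fadd_eq by simp
    show ?thesis unfolding M_def
    proof (rule supnorm_le)
      fix u show "norm (R f u) \<le> supnorm (fadd f h)"
      proof (cases "u \<in> unitcube k")
        case True
        have "h (alpha u) = 0" using hv alpha_FJ[OF True] by blast
        then have "R f u = fadd f h (alpha u)" using True by (simp add: R_def fadd_def)
        then show ?thesis using supnorm_ge[OF bd] by simp
      next
        case False then show ?thesis using supnorm_nonneg[OF bd] by (simp add: R_def)
      qed
    qed
  qed
  have upper: "\<exists>h\<in>KK. supnorm (fadd f h) \<le> M + \<epsilon>" if eps: "0 < \<epsilon>" for \<epsilon>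
  proof -
    define C where "C = stdsimplex n \<inter> (\<lambda>x. norm (f x)) -` {M + \<epsilon>..}"
    have nc: "continuous_on (stdsimplex n) (\<lambda>x. norm (f x))" by (rule continuous_on_norm[OF fc])
    have "closed C" unfolding C_def
      by (rule continuous_closed_preimage[OF nc compact_imp_closed[OF compact_stdsimplex]]) simp
    then have cC: "compact C" using compact_Int_closed[OF compact_stdsimplex] unfolding C_def
      by (metis inf.left_idem)
    show ?thesis
    proof (cases "C = {}")
      case True
      have "norm (f x) \<le> M + \<epsilon>" for x
      proof (cases "x \<in> stdsimplex n")
        case True then have "x \<notin> C" using \<open>C = {}\<close> by simp
        then show ?thesis using True by (simp add: C_def)
      next
        case False then show ?thesis using f0 M0 eps by simp
      qed
      then have "supnorm (fadd f (\<lambda>x. 0)) \<le> M + \<epsilon>" by (intro supnorm_le) (simp add: fadd_def)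
      then show ?thesis using zero_KK by blast
    next
      case False
      obtain x0 where x0: "x0 \<in> C" "\<forall>y\<in>C. DD x0 \<le> DD y"
        using continuous_attains_inf[OF cC False DD_cont] by blast
      define \<delta> where "\<delta> = DD x0"
      have "\<delta> \<noteq> 0"
      proof
        assume "\<delta> = 0"
        then have "x0 \<in> FJ" using DD_zero x0 unfolding C_def \<delta>_def by blast
        then have "norm (f x0) \<le> M" by (rule fFJ)
        then show False using x0 eps unfolding C_def by simp
      qed
      then have dpos: "0 < \<delta>" using DD_nonneg[of x0] unfolding \<delta>_def by linarith
      define \<psi> where "\<psi> x = max 0 (1 - DD x / \<delta>)" for x
      define h where "h x = (\<psi> x - 1) *\<^sub>R f x" for x
      have \<psi>c: "continuous_on S \<psi>" for S unfolding \<psi>_def[abs_def]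
        by (intro continuous_on_max continuous_on_const continuous_on_diff continuous_on_divide DD_cont)
          (use dpos in auto)
      have hB: "h \<in> BalgJ n I J" unfolding h_def
      proof (rule BalgJ_scaleI[OF fB])
        show "continuous_on (stdsimplex n) (\<lambda>x. (\<psi> x - 1) *\<^sub>R f x)"
          by (intro continuous_on_scaleR continuous_on_diff \<psi>c continuous_on_const fc)
        show "\<forall>j'\<le>n. j' \<notin> J \<longrightarrow> (\<forall>x\<in>stdsimplex_part n j'. (\<psi> x - 1) *\<^sub>R f x = 0)"
          using f unfolding BalgJ_def by auto
      qed
      have hv: "\<forall>x\<in>FJ. h x = 0" using FJ_DD by (simp add: h_def \<psi>_def)
      have hK: "h \<in> KK" using hB hv KK_char by blast
      have "norm (fadd f h x) \<le> M + \<epsilon>" for x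
      proof -
        have eq: "fadd f h x = \<psi> x *\<^sub>R f x" by (simp add: fadd_def h_def algebra_simps)
        have p01: "0 \<le> \<psi> x" "\<psi> x \<le> 1" using DD_nonneg[of x] dpos by (auto simp: \<psi>_def)
        show ?thesis
        proof (cases "x \<in> stdsimplex n")
          case False then show ?thesis using f0 eq M0 eps by simp
        next
          case True
          show ?thesis
          proof (cases "DD x < \<delta>")
            case lt: True
            then have "x \<notin> C" using x0 \<delta>_def by force
            then have "norm (f x) < M + \<epsilon>" using True by (simp add: C_def)
            moreover have "norm (\<psi> x *\<^sub>R f x) \<le> norm (f x)"
              using p01 by (simp add: mult_left_le_one_le)
            ultimately show ?thesis using eq by simp
          next
            case False
            then have "\<psi> x = 0" using dpos by (simp add: \<psi>_def divide_simps)
            then show ?thesis using eq M0 eps by simp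
          qed
        qed
      qed
      then have "supnorm (fadd f h) \<le> M + \<epsilon>" by (intro supnorm_le)
      then show ?thesis using hK by blast
    qed
  qed
  have bb: "bdd_below ((\<lambda>h. supnorm (fadd f h)) ` KK)"
  proof (rule bdd_belowI)
    fix y assume "y \<in> (\<lambda>h. supnorm (fadd f h)) ` KK"
    then obtain h where h: "h \<in> KK" "y = supnorm (fadd f h)" by blast
    have "bdd_above (range (\<lambda>x. norm (fadd f h x)))" using BalgJ_bdd[OF addB[OF h(1)]] fadd_eq by simp
    then show "0 \<le> y" using h supnorm_nonneg by simp
  qed
  have "M \<le> quot_norm KK f" unfolding quot_norm_def
    using zero_KK lower by (intro cINF_greatest) auto
  moreover have "quot_norm KK f \<le> M"
  proof (rule field_le_epsilon)
    fix \<epsilon> :: real assume "0 < \<epsilon>"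
    then obtain h where "h \<in> KK" "supnorm (fadd f h) \<le> M + \<epsilon>" using upper by blast
    then show "quot_norm KK f \<le> M + \<epsilon>" unfolding quot_norm_def using bb
      by (intro cINF_lower2) auto
  qed
  ultimately show ?thesis unfolding M_def by simp
qed


lemma self_coset: "f \<in> coset KK f"
  unfolding coset_def using zero_KK by (auto simp: fadd_def intro!: exI[of _ "\<lambda>x. 0"])

lemma R_coset: "h \<in> coset KK f \<Longrightarrow> R h = R f"
proof -
  assume "h \<in> coset KK f"
  then obtain k' where k': "k' \<in> KK" "h = fadd f k'" unfolding coset_def by blast
  have "\<forall>x\<in>FJ. k' x = 0" using k' KK_char by blast
  show ?thesis
  proof
    fix u show "R h u = R f u"
    proof (cases "u \<in> unitcube k")
      case True
      then have "k' (alpha u) = 0" using \<open>\<forall>x\<in>FJ. k' x = 0\<close> alpha_FJ by blast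
      then show ?thesis using True k'(2) by (simp add: R_def fadd_def)
    qed (simp add: R_def)
  qed
qed

lemma coset_eq:
  assumes f1: "f1 \<in> BalgJ n I J" and f2: "f2 \<in> BalgJ n I J" and eq: "\<forall>x\<in>FJ. f1 x = f2 x"
  shows "coset KK f1 = coset KK f2"
proof -
  have sub: "coset KK g1 \<subseteq> coset KK g2"
    if g1: "g1 \<in> BalgJ n I J" and g2: "g2 \<in> BalgJ n I J" and eq: "\<forall>x\<in>FJ. g1 x = g2 x" for g1 g2
  proof
    fix h assume "h \<in> coset KK g1"
    then obtain k' where k': "k' \<in> KK" "h = fadd g1 k'" unfolding coset_def by blast
    have kB: "k' \<in> BalgJ n I J" and kv: "\<forall>x\<in>FJ. k' x = 0" using k' KK_char by auto
    define k2 where "k2 = (\<lambda>x. (g1 x - g2 x) + k' x)"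
    have "k2 \<in> BalgJ n I J" unfolding k2_def by (intro BalgJ_add BalgJ_diff g1 g2 kB)
    moreover have "\<forall>x\<in>FJ. k2 x = 0" using eq kv by (simp add: k2_def)
    ultimately have "k2 \<in> KK" using KK_char by blast
    moreover have "h = fadd g2 k2" using k' by (simp add: fadd_def k2_def fun_eq_iff)
    ultimately show "h \<in> coset KK g2" unfolding coset_def by blast
  qed
  have eq': "\<forall>x\<in>FJ. f2 x = f1 x" using eq by simp
  show ?thesis by (rule subset_antisym[OF sub[OF f1 f2 eq] sub[OF f2 f1 eq']])
qed

end

theorem lemma4p4p10:
  fixes I :: "nat \<Rightarrow> 'a::cstar_algebra set"
    and n p :: nat and J :: "nat set"
  assumes ideals: "\<forall>j\<le>n. cstar_ideal (I j)"
    and sum_all: "\<forall>a::'a. \<exists>b. (\<forall>j\<le>n. b j \<in> I j) \<and> a = (\<Sum>j\<le>n. b j)"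
    and p_le: "p \<le> n"
    and J_sub: "J \<subseteq> {..n}"
    and J_card: "card J = p + 1"
  shows "quot_cstar_iso (BalgJ n I J) (BalgJ n I J \<inter> Qalg n I (int p - 1))
           (susp (n - p) (\<Inter>j\<in>J. I j))"
proof -
  have "card ({..n} - J) = n - p"
    using J_sub J_card by (simp add: card_Diff_subset finite_subset)
  then obtain e where e: "bij_betw e {..<n-p} ({..n} - J)"
    using finite_same_card_bij[of "{..<n-p}" "{..n} - J"] by auto
  interpret L: L4 I n p J e using ideals p_le J_sub J_card e by unfold_locales auto
  let ?X = "BalgJ n I J" and ?K = "BalgJ n I J \<inter> Qalg n I (int p - 1)"
    and ?Y = "susp (n - p) (\<Inter>j\<in>J. I j)"
  have KK: "?K = L.KK" by (simp add: L.KK_def)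
  define \<Psi> where "\<Psi> C = L.R (SOME f. C = coset L.KK f)" for C
  have \<Psi>c: "\<Psi> (coset L.KK f) = L.R f" for f
  proof -
    define f' where "f' = (SOME f'. coset L.KK f = coset L.KK f')"
    have "coset L.KK f = coset L.KK f'" unfolding f'_def by (rule someI[of _ f]) simp
    then have "f' \<in> coset L.KK f" using L.self_coset by simp
    then have "L.R f' = L.R f" by (rule L.R_coset)
    then show ?thesis unfolding \<Psi>_def f'_def by simp
  qed
  have inj: "inj_on \<Psi> (coset L.KK ` ?X)"
  proof (rule inj_onI)
    fix C1 C2 assume C1: "C1 \<in> coset L.KK ` ?X" and C2: "C2 \<in> coset L.KK ` ?X" and eq: "\<Psi> C1 = \<Psi> C2"
    obtain f1 where f1: "f1 \<in> ?X" "C1 = coset L.KK f1" using C1 by blast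
    obtain f2 where f2: "f2 \<in> ?X" "C2 = coset L.KK f2" using C2 by blast
    have R: "L.R f1 = L.R f2" using eq f1 f2 \<Psi>c by simp
    have "\<forall>x\<in>L.FJ. f1 x = f2 x"
    proof
      fix x assume x: "x \<in> L.FJ"
      have bc: "L.beta x \<in> unitcube (n - p)" using L.beta_cube L.FJ_simplex x by blast
      have "L.R f1 (L.beta x) = f1 x" "L.R f2 (L.beta x) = f2 x"
        using bc L.alpha_beta[OF x] by (simp_all add: L.R_def)
      then show "f1 x = f2 x" using R by simp
    qed
    then have "coset L.KK f1 = coset L.KK f2" by (rule L.coset_eq[OF f1(1) f2(1)])
    then show "C1 = C2" using f1(2) f2(2) by simp
  qed
  have img: "\<Psi> ` (coset L.KK ` ?X) = ?Y"
  proof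
    show "\<Psi> ` (coset L.KK ` ?X) \<subseteq> ?Y"
    proof
      fix y assume "y \<in> \<Psi> ` (coset L.KK ` ?X)"
      then obtain f where f: "f \<in> ?X" "y = \<Psi> (coset L.KK f)" by blast
      then have "y = L.R f" using \<Psi>c by simp
      then show "y \<in> ?Y" using L.R_susp[OF f(1)] by simp
    qed
    show "?Y \<subseteq> \<Psi> ` (coset L.KK ` ?X)"
    proof
      fix g assume "g \<in> ?Y"
      then obtain f where "f \<in> ?X" "L.R f = g" using L.surj_R by blast
      then have "g = \<Psi> (coset L.KK f)" using \<Psi>c by simp
      moreover have "coset L.KK f \<in> coset L.KK ` ?X" using \<open>f \<in> ?X\<close> by (rule imageI)
      ultimately show "g \<in> \<Psi> ` (coset L.KK ` ?X)" by (rule image_eqI)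
    qed
  qed
  have hadd: "\<Psi> (coset L.KK (fadd f g)) = fadd (\<Psi> (coset L.KK f)) (\<Psi> (coset L.KK g))" for f g
    unfolding \<Psi>c by (simp add: L.R_def fadd_def fun_eq_iff)
  have hmul: "\<Psi> (coset L.KK (fmul f g)) = fmul (\<Psi> (coset L.KK f)) (\<Psi> (coset L.KK g))" for f g
    unfolding \<Psi>c by (simp add: L.R_def fmul_def fun_eq_iff)
  have hsc: "\<Psi> (coset L.KK (fscale c f)) = fscale c (\<Psi> (coset L.KK f))" for c f
    unfolding \<Psi>c by (simp add: L.R_def fscale_def fun_eq_iff scaleC_zero)
  have hadj: "\<Psi> (coset L.KK (fadj f)) = fadj (\<Psi> (coset L.KK f))" for f
    unfolding \<Psi>c by (simp add: L.R_def fadj_def fun_eq_iff adj_zero)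
  have hn: "supnorm (\<Psi> (coset L.KK f)) = quot_norm L.KK f" if "f \<in> ?X" for f
    unfolding \<Psi>c by (rule L.norm_eq[OF that])
  have bij: "bij_betw \<Psi> (coset L.KK ` ?X) ?Y" using inj img by (simp only: bij_betw_def)
  show ?thesis unfolding quot_cstar_iso_def KK
  proof (intro exI[of _ \<Psi>] conjI ballI allI)
  qed (use bij hadd hmul hsc hadj hn in simp_all)
qed

end
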